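(* Let $\mathbb{X}$ be a finite set and let $G=(G(x,y))_{x,y\in\mathbb{X}}$ be a real symmetric, conditionally positive semi-definite matrix which has an equilibrium measure $\nu^*\in\mathcal{P}_+$. Let $\{a_k\}_{k=0}^\infty$ be a Leja sequence with respect to $G$, and for $n\ge 1$ let $\sigma_n=\frac1n\sum_{j=0}^{n-1}\delta_{a_j}$. Let $M=\max_{x\in\mathbb{X}}|G(x,x)|$. Then for every integer $n\ge 1$, $$G(\sigma_n-\nu^*,\sigma_n-\nu^* )\le \frac{1}{n}\left(M-G(\nu^*,\nu^* )\right).$$ Moreover, any weak-star limit of a subsequence of $\{\sigma_n\}$ is also an equilibrium measure for $G$.
   Context: Functions $\nu:\mathbb{X}\to\mathbb{R}$ are identified with measures/vectors on $\mathbb{X}$; $\delta_a$ is the Dirac measure at $a$. For such $\mu,\nu$ write $G(x,\nu)=\sum_{y}G(x,y)\nu(y)$ and $G(\mu,\nu)=\sum_{x,y}G(x,y)\mu(x)\nu(y)$. $\mathcal{P}$ is the set of probability measures on $\mathbb{X}$, and $\mathcal{P}_+$ the set of $\nu\in\mathcal{P}$ with $\nu(x)>0$ for all $x$. $G$ is conditionally positive semi-definite if $v^\intercal Gv\ge 0$ whenever $\sum_x v(x)=0$. A measure $\nu^*\in\mathcal{P}$ is an equilibrium measure for $G$ if $G(\nu^*,\nu^* )=\min_{\nu\in\mathcal{P}}G(\nu,\nu)$. A Leja sequence with respect to $G$ is a sequence $\{a_k\}_{k=0}^\infty$ in $\mathbb{X}$ ($a_0$ arbitrary) such that for each $k\ge1$,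 $a_k$ minimizes $x\mapsto\sum_{j=0}^{k-1}G(x,a_j)$ over $\mathbb{X}$ (ties broken arbitrarily; points may repeat). *)

theory Defs
  imports Main "HOL-Analysis.Analysis"
begin

text \<open>Measures on the finite set X (a finite type 'a) are functions 'a => real.\<close>

definition Gform :: "('a::finite \<Rightarrow> 'a \<Rightarrow> real) \<Rightarrow> ('a \<Rightarrow> real) \<Rightarrow> ('a \<Rightarrow> real) \<Rightarrow> real" where
  "Gform G \<mu> \<nu> = (\<Sum>x\<in>UNIV. \<Sum>y\<in>UNIV. G x y * \<mu> x * \<nu> y)"

definition prob_meas :: "('a::finite \<Rightarrow> real) \<Rightarrow> bool" where
  "prob_meas \<nu> \<longleftrightarrow> (\<forall>x. 0 \<le> \<nu> x) \<and> (\<Sum>x\<in>UNIV. \<nu> x) = 1"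

definition pos_prob_meas :: "('a::finite \<Rightarrow> real) \<Rightarrow> bool" where
  "pos_prob_meas \<nu> \<longleftrightarrow> prob_meas \<nu> \<and> (\<forall>x. 0 < \<nu> x)"

definition cond_psd :: "('a::finite \<Rightarrow> 'a \<Rightarrow> real) \<Rightarrow> bool" where
  "cond_psd G \<longleftrightarrow> (\<forall>v. (\<Sum>x\<in>UNIV. v x) = 0 \<longrightarrow> 0 \<le> Gform G v v)"

definition equilibrium_measure :: "('a::finite \<Rightarrow> 'a \<Rightarrow> real) \<Rightarrow> ('a \<Rightarrow> real) \<Rightarrow> bool" where
  "equilibrium_measure G \<nu> \<longleftrightarrow> prob_meas \<nu> \<and> (\<forall>\<mu>. prob_meas \<mu> \<longrightarrow> Gform G \<nu> \<nu> \<le> Gform G \<mu> \<mu>)"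

definition leja_seq :: "('a::finite \<Rightarrow> 'a \<Rightarrow> real) \<Rightarrow> (nat \<Rightarrow> 'a) \<Rightarrow> bool" where
  "leja_seq G a \<longleftrightarrow> (\<forall>k\<ge>1. \<forall>x. (\<Sum>j<k. G (a k) (a j)) \<le> (\<Sum>j<k. G x (a j)))"

definition dirac :: "'a \<Rightarrow> 'a \<Rightarrow> real" where
  "dirac a = (\<lambda>x. if x = a then 1 else 0)"

definition empirical :: "(nat \<Rightarrow> 'a) \<Rightarrow> nat \<Rightarrow> 'a \<Rightarrow> real" where
  "empirical a n = (\<lambda>x. (1 / real n) * (\<Sum>j<n. dirac (a j) x))"

end

theory Submission
  imports Defs
begin

lemma Gform_left: "Gform G \<mu> \<nu> = (\<Sum>x\<in>UNIV. \<mu> x * (\<Sum>y\<in>UNIV. G x y * \<nu> y))"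
  unfolding Gform_def by (simp add: sum_distrib_left algebra_simps)

lemma Gform_sym:
  assumes "\<And>x y. G x y = G y x"
  shows "Gform G \<mu> \<nu> = Gform G \<nu> \<mu>"
  unfolding Gform_def using assms
  by (subst sum.swap) (simp add: algebra_simps)

lemma Gform_quad:
  "Gform G (\<lambda>z. \<nu> z + t * v z) (\<lambda>z. \<nu> z + t * v z)
   = Gform G \<nu> \<nu> + t * (Gform G v \<nu> + Gform G \<nu> v) + t^2 * Gform G v v"
  unfolding Gform_def
  by (simp add: algebra_simps sum.distrib sum_distrib_left power2_eq_square)

lemma Gform_diff:
  "Gform G (\<lambda>z. p z - q z) (\<lambda>z. p z - q z)
   = Gform G p p - Gform G p q - Gform G q p + Gform G q q"
  unfolding Gform_def
  by (simp add: algebra_simps sum.distrib sum_subtractf sum_distrib_left)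

lemma dirac_sum: "(\<Sum>x\<in>UNIV. dirac (b::'a::finite) x * f x) = (f b :: real)"
proof -
  have "(\<Sum>x\<in>UNIV. dirac b x * f x) = (\<Sum>x\<in>UNIV. if x = b then f b else 0)"
    unfolding dirac_def by (rule sum.cong) auto
  also have "\<dots> = f b" by (subst sum.delta) auto
  finally show ?thesis .
qed

lemma emp_sum:
  fixes a :: "nat \<Rightarrow> 'a::finite"
  shows
  "(\<Sum>x\<in>UNIV. empirical a n x * f x) = (1 / real n) * (\<Sum>i<n. f (a i))"
proof -
  have "(\<Sum>x\<in>UNIV. empirical a n x * f x)
      = (1 / real n) * (\<Sum>i<n. \<Sum>x\<in>UNIV. dirac (a i) x * f x)"
    unfolding empirical_def
    by (simp add: sum_distrib_left sum_distrib_right sum.swap[of _ "{..<n}"] algebra_simps)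
  also have "\<dots> = (1 / real n) * (\<Sum>i<n. f (a i))"
    by (simp add: dirac_sum)
  finally show ?thesis .
qed


lemma dirac_sum1: "(\<Sum>z\<in>UNIV. dirac (b::'a::finite) z) = 1"
  using dirac_sum[of b "\<lambda>_. 1"] by simp

theorem theorem5p1:
  fixes G :: "'a::finite \<Rightarrow> 'a \<Rightarrow> real"
    and \<nu>s :: "'a \<Rightarrow> real"
    and a :: "nat \<Rightarrow> 'a"
  assumes symm: "\<And>x y. G x y = G y x"
    and cpsd: "cond_psd G"
    and eq: "equilibrium_measure G \<nu>s"
    and pos: "pos_prob_meas \<nu>s"
    and leja: "leja_seq G a"
  shows "(\<forall>n::nat. n \<ge> 1 \<longrightarrow>
            Gform G (\<lambda>x. empirical a n x - \<nu>s x) (\<lambda>x. empirical a n x - \<nu>s x)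
              \<le> (1 / real n) * (Max (range (\<lambda>x. \<bar>G x x\<bar>)) - Gform G \<nu>s \<nu>s))
       \<and> (\<forall>(r::nat \<Rightarrow> nat) \<mu>. strict_mono r \<longrightarrow>
            (\<forall>x. (\<lambda>k. empirical a (r k) x) \<longlonglongrightarrow> \<mu> x) \<longrightarrow>
            equilibrium_measure G \<mu>)"
proof -
  define c where "c = Gform G \<nu>s \<nu>s"
  define pot where "pot x = (\<Sum>y\<in>UNIV. G x y * \<nu>s y)" for x
  define M where "M = Max (range (\<lambda>x. \<bar>G x x\<bar>))"
  have nu_prob: "prob_meas \<nu>s" using eq unfolding equilibrium_measure_def by blast
  have nu_pos: "\<And>x. 0 < \<nu>s x" using pos unfolding pos_prob_meas_def by blast
  have nu_sum: "(\<Sum>x\<in>UNIV. \<nu>s x) = 1" using nu_prob unfolding prob_meas_def by blast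
  have nu_min: "\<And>\<mu>. prob_meas \<mu> \<Longrightarrow> c \<le> Gform G \<mu> \<mu>"
    using eq unfolding equilibrium_measure_def c_def by blast
  have pot_eq: "pot x = pot y" for x y
  proof -
    define v where "v = (\<lambda>z. dirac x z - dirac y z)"
    define B where "B = Gform G v \<nu>s"
    define C where "C = Gform G v v"
    define m where "m = min (\<nu>s x) (\<nu>s y)"
    have m_pos: "0 < m" using nu_pos by (simp add: m_def)
    have key: "0 \<le> 2*t*B + t^2*C" if tm: "\<bar>t\<bar> \<le> m" for t
    proof -
      have "\<forall>z. 0 \<le> \<nu>s z + t * v z"
      proof
        fix z
        have "m \<le> \<nu>s x" "m \<le> \<nu>s y" by (auto simp: m_def)
        then show "0 \<le> \<nu>s z + t * v z"
          using tm nu_pos[of z] unfolding v_def dirac_def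
          by (auto simp: abs_le_iff split: if_splits)
      qed
      moreover have "(\<Sum>z\<in>UNIV. \<nu>s z + t * v z) = 1"
        by (simp add: sum.distrib sum_distrib_left[symmetric] v_def sum_subtractf nu_sum dirac_sum1)
      ultimately have pm: "prob_meas (\<lambda>z. \<nu>s z + t * v z)"
        unfolding prob_meas_def by blast
      have sB: "Gform G \<nu>s v = B" unfolding B_def by (rule Gform_sym[OF symm])
      have "c \<le> Gform G (\<lambda>z. \<nu>s z + t * v z) (\<lambda>z. \<nu>s z + t * v z)"
        by (rule nu_min[OF pm])
      also have "\<dots> = c + 2*t*B + t^2*C"
        unfolding Gform_quad sB by (simp add: c_def B_def C_def)
      finally show ?thesis by simp
    qed
    have "B = 0"
    proof (rule ccontr)
      assume Bn: "B \<noteq> 0"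
      define t where "t = min m (\<bar>B\<bar> / (\<bar>C\<bar> + 1))"
      have t_pos: "0 < t" using m_pos Bn by (simp add: t_def)
      have "t \<le> \<bar>B\<bar> / (\<bar>C\<bar> + 1)" by (simp add: t_def)
      then have "t * (\<bar>C\<bar> + 1) \<le> \<bar>B\<bar>"
        by (simp add: pos_le_divide_eq add_pos_nonneg)
      then have tC: "t * \<bar>C\<bar> < \<bar>B\<bar>" using t_pos by (simp add: algebra_simps)
      have tm: "\<bar>t\<bar> \<le> m" "\<bar>-t\<bar> \<le> m" using t_pos by (auto simp: t_def)
      have k1: "0 \<le> 2*t*B + t^2*C" by (rule key[OF tm(1)])
      have k2: "0 \<le> 2*(-t)*B + (-t)^2*C" by (rule key[OF tm(2)])
      have "0 \<le> t * (2*B + t*C)" using k1 by (simp add: power2_eq_square algebra_simps)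
      then have a1: "0 \<le> 2*B + t*C" using t_pos by (simp add: zero_le_mult_iff)
      have "0 \<le> t * (-2*B + t*C)" using k2 by (simp add: power2_eq_square algebra_simps)
      then have a2: "0 \<le> -2*B + t*C" using t_pos by (simp add: zero_le_mult_iff)
      have "t*C \<le> t*\<bar>C\<bar>" using t_pos by (simp add: mult_left_mono)
      then have "2*\<bar>B\<bar> \<le> t*\<bar>C\<bar>" using a1 a2 by linarith
      then show False using tC Bn by linarith
    qed
    moreover have "B = pot x - pot y"
      unfolding B_def Gform_left v_def pot_def
      by (simp add: left_diff_distrib sum_subtractf dirac_sum)
    ultimately show ?thesis by simp
  qed
  have pot_c: "pot x = c" for x
  proof -
    have "c = (\<Sum>z\<in>UNIV. \<nu>s z * pot z)" unfolding c_def Gform_left pot_def ..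
    also have "\<dots> = (\<Sum>z\<in>UNIV. \<nu>s z * pot x)" by (rule sum.cong[OF refl]) (metis pot_eq)
    also have "\<dots> = pot x" by (simp add: sum_distrib_right[symmetric] nu_sum)
    finally show ?thesis by simp
  qed
  have Gnu: "Gform G \<mu> \<nu>s = c * (\<Sum>x\<in>UNIV. \<mu> x)" for \<mu>
  proof -
    have "Gform G \<mu> \<nu>s = (\<Sum>x\<in>UNIV. \<mu> x * pot x)" unfolding Gform_left pot_def ..
    also have "\<dots> = c * (\<Sum>x\<in>UNIV. \<mu> x)" by (simp add: pot_c sum_distrib_left mult.commute)
    finally show ?thesis .
  qed
  have emp1: "(\<Sum>x\<in>UNIV. empirical a n x) = 1" if "n \<ge> 1" for n
    using emp_sum[of a n "\<lambda>_. 1"] that by simp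
  define S where "S n = (\<Sum>i<n. \<Sum>j<n. G (a i) (a j))" for n
  have GM: "G z z \<le> M" for z
  proof -
    have "\<bar>G z z\<bar> \<le> M" unfolding M_def by (rule Max_ge) auto
    then show ?thesis by simp
  qed
  have U: "(\<Sum>j<n. G (a n) (a j)) \<le> real n * c" for n
  proof -
    have le: "(\<Sum>j<n. G (a n) (a j)) \<le> (\<Sum>j<n. G x (a j))" for x
    proof (cases "n = 0")
      case True then show ?thesis by simp
    next
      case False then show ?thesis using leja unfolding leja_seq_def by simp
    qed
    have "(\<Sum>j<n. G (a n) (a j)) = (\<Sum>x\<in>UNIV. \<nu>s x * (\<Sum>j<n. G (a n) (a j)))"
      by (simp add: sum_distrib_right[symmetric] nu_sum)
    also have "\<dots> \<le> (\<Sum>x\<in>UNIV. \<nu>s x * (\<Sum>j<n. G x (a j)))"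
      by (intro sum_mono mult_left_mono le) (simp add: less_imp_le nu_pos)
    also have "\<dots> = (\<Sum>j<n. pot (a j))"
      unfolding pot_def by (simp add: sum_distrib_left sum.swap[of _ UNIV] symm mult.commute)
    also have "\<dots> = real n * c" by (simp add: pot_c)
    finally show ?thesis .
  qed
  have S_Suc: "S (Suc n) = S n + 2 * (\<Sum>j<n. G (a n) (a j)) + G (a n) (a n)" for n
  proof -
    have sw: "(\<Sum>i<n. G (a i) (a n)) = (\<Sum>j<n. G (a n) (a j))"
      by (intro sum.cong refl) (rule symm)
    show ?thesis unfolding S_def using sw by (simp add: sum.distrib)
  qed
  have Sb: "S n \<le> real n * M + real n * (real n - 1) * c" for n
  proof (induction n)
    case 0 then show ?case by (simp add: S_def)
  next
    case (Suc n)
    have e: "real (Suc n) * M + real (Suc n) * (real (Suc n) - 1) * c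
        = (real n * M + real n * (real n - 1) * c) + 2 * (real n * c) + M"
      by (simp add: algebra_simps)
    show ?case unfolding e S_Suc using Suc U[of n] GM[of "a n"] by linarith
  qed
  have Gss: "Gform G (empirical a n) (empirical a n) = S n / (real n)^2" for n
  proof -
    have inner: "(\<Sum>y\<in>UNIV. G x y * empirical a n y) = (1 / real n) * (\<Sum>j<n. G x (a j))" for x
    proof -
      have "(\<Sum>y\<in>UNIV. G x y * empirical a n y) = (\<Sum>y\<in>UNIV. empirical a n y * G x y)"
        by (simp add: mult.commute)
      also have "\<dots> = (1 / real n) * (\<Sum>j<n. G x (a j))" by (rule emp_sum)
      finally show ?thesis .
    qed
    have "Gform G (empirical a n) (empirical a n)
        = (\<Sum>x\<in>UNIV. empirical a n x * ((1 / real n) * (\<Sum>j<n. G x (a j))))"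
      unfolding Gform_left inner ..
    also have "\<dots> = (1 / real n) * (\<Sum>i<n. (1 / real n) * (\<Sum>j<n. G (a i) (a j)))"
      by (rule emp_sum)
    also have "\<dots> = S n / (real n)^2"
    proof -
      have "(\<Sum>i<n. (1 / real n) * (\<Sum>j<n. G (a i) (a j))) = (1 / real n) * S n"
        unfolding S_def by (rule sum_distrib_left[symmetric])
      then show ?thesis by (simp add: power2_eq_square)
    qed
    finally show ?thesis .
  qed
  have diff: "Gform G (\<lambda>x. empirical a n x - \<nu>s x) (\<lambda>x. empirical a n x - \<nu>s x)
      = Gform G (empirical a n) (empirical a n) - c" if "n \<ge> 1" for n
  proof -
    have e1: "Gform G (empirical a n) \<nu>s = c" using Gnu emp1[OF that] by simp
    moreover have "Gform G \<nu>s (empirical a n) = c"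
    proof -
      have "Gform G \<nu>s (empirical a n) = Gform G (empirical a n) \<nu>s" by (rule Gform_sym[OF symm])
      then show ?thesis using e1 by simp
    qed
    ultimately show ?thesis unfolding Gform_diff c_def by simp
  qed
  have part1: "Gform G (\<lambda>x. empirical a n x - \<nu>s x) (\<lambda>x. empirical a n x - \<nu>s x)
      \<le> (1 / real n) * (M - c)" if n1: "n \<ge> 1" for n
  proof -
    have np: "0 < real n" using n1 by simp
    have "S n / (real n)^2 \<le> (real n * M + real n * (real n - 1) * c) / (real n)^2"
      by (rule divide_right_mono[OF Sb]) simp
    also have "\<dots> = (1 / real n) * (M - c) + c"
      using np by (simp add: field_simps power2_eq_square)
    finally show ?thesis unfolding diff[OF n1] Gss by simp
  qed
  have part2: "equilibrium_measure G \<mu>"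
    if r: "strict_mono r" and lim: "\<forall>x. (\<lambda>k. empirical a (r k) x) \<longlonglongrightarrow> \<mu> x" for r \<mu>
  proof -
    have rk: "k \<le> r k" for k using seq_suble[OF r] .
    have lim': "(\<lambda>k. empirical a (r k) x) \<longlonglongrightarrow> \<mu> x" for x using lim by blast
    have nonneg: "0 \<le> \<mu> x" for x
    proof (rule LIMSEQ_le_const[OF lim'])
      show "\<exists>N. \<forall>n\<ge>N. 0 \<le> empirical a (r n) x"
        by (intro exI[of _ 0] allI impI) (simp add: empirical_def dirac_def sum_nonneg)
    qed
    have sl: "(\<lambda>k. \<Sum>x\<in>UNIV. empirical a (r k) x) \<longlonglongrightarrow> (\<Sum>x\<in>UNIV. \<mu> x)"
      by (intro tendsto_sum lim')
    have sl1: "(\<lambda>k. \<Sum>x\<in>UNIV. empirical a (r k) x) \<longlonglongrightarrow> 1"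
    proof (rule Lim_transform_eventually[OF tendsto_const])
      show "\<forall>\<^sub>F k in sequentially. 1 = (\<Sum>x\<in>UNIV. empirical a (r k) x)"
        unfolding eventually_sequentially
        using emp1 rk by (metis le_trans)
    qed
    have psum: "(\<Sum>x\<in>UNIV. \<mu> x) = 1" using LIMSEQ_unique[OF sl sl1] .
    have pm: "prob_meas \<mu>" unfolding prob_meas_def using nonneg psum by blast
    have gl: "(\<lambda>k. Gform G (empirical a (r k)) (empirical a (r k))) \<longlonglongrightarrow> Gform G \<mu> \<mu>"
      unfolding Gform_def by (intro tendsto_sum tendsto_mult tendsto_const lim')
    have bl: "(\<lambda>k. c + (M - c) / real (r k)) \<longlonglongrightarrow> c + 0"
      using LIMSEQ_subseq_LIMSEQ[OF lim_const_over_n[of "M - c"] r]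
      by (intro tendsto_add tendsto_const) (simp add: o_def)
    have "Gform G \<mu> \<mu> \<le> c + 0"
    proof (rule LIMSEQ_le[OF gl bl])
      show "\<exists>N. \<forall>n\<ge>N. Gform G (empirical a (r n)) (empirical a (r n)) \<le> c + (M - c) / real (r n)"
      proof (intro exI allI impI)
        fix n :: nat assume "1 \<le> n"
        then have n1: "1 \<le> r n" using rk[of n] by linarith
        show "Gform G (empirical a (r n)) (empirical a (r n)) \<le> c + (M - c) / real (r n)"
          using part1[OF n1] diff[OF n1] by simp
      qed
    qed
    then show ?thesis unfolding equilibrium_measure_def using pm nu_min by fastforce
  qed
  show ?thesis using part1 part2 unfolding M_def c_def by blast
qed

end
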